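(* Let $G'$ be an identifiable graph, $v$ a vertex of $G'$ and $S$ a $\Delta$-star with $\Delta\ge 3$, and let $G=G'\rhd_v S$. Then $G$ is identifiable and $\gamma^{\rm ID}(G) \le \gamma^{\rm ID}(G') + \Delta - 1$.
   Context: A graph is identifiable if it has no two distinct vertices with the same closed neighborhood $N[\cdot]$. An identifying code of $G$ is a set $C\subseteq V(G)$ such that every vertex $v$ has $N[v]\cap C\neq\emptyset$ and for all distinct $u,v$, $N[u]\cap C \ne N[v]\cap C$; $\gamma^{\rm ID}(G)$ is its minimum size. A $\Delta$-star is $K_{1,\Delta}$. For a graph $G'$, a vertex $v$ of $G'$ and a star $S$, $G'\rhd_v S$ is the graph obtained from the disjoint union of $G'$ and $S$ by identifying $v$ with a leaf of $S$. *)

theory Defs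
  imports Main
begin

type_synonym 'a graph = "'a set \<times> ('a \<Rightarrow> 'a \<Rightarrow> bool)"

definition verts :: "'a graph \<Rightarrow> 'a set" where "verts G = fst G"
definition adj :: "'a graph \<Rightarrow> 'a \<Rightarrow> 'a \<Rightarrow> bool" where "adj G = snd G"

definition simple_graph :: "'a graph \<Rightarrow> bool" where
  "simple_graph G \<longleftrightarrow> finite (verts G)
     \<and> (\<forall>x y. adj G x y \<longrightarrow> x \<in> verts G \<and> y \<in> verts G)
     \<and> (\<forall>x y. adj G x y \<longrightarrow> adj G y x)
     \<and> (\<forall>x. \<not> adj G x x)"

definition cnbhd :: "'a graph \<Rightarrow> 'a \<Rightarrow> 'a set" where
  "cnbhd G x = {y \<in> verts G. y = x \<or> adj G x y}"

definition identifiable :: "'a graph \<Rightarrow> bool" where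
  "identifiable G \<longleftrightarrow> (\<forall>u\<in>verts G. \<forall>w\<in>verts G. u \<noteq> w \<longrightarrow> cnbhd G u \<noteq> cnbhd G w)"

definition is_id_code :: "'a graph \<Rightarrow> 'a set \<Rightarrow> bool" where
  "is_id_code G C \<longleftrightarrow> C \<subseteq> verts G
     \<and> (\<forall>x\<in>verts G. cnbhd G x \<inter> C \<noteq> {})
     \<and> (\<forall>u\<in>verts G. \<forall>w\<in>verts G. u \<noteq> w \<longrightarrow> cnbhd G u \<inter> C \<noteq> cnbhd G w \<inter> C)"

definition gamma_ID :: "'a graph \<Rightarrow> nat" where
  "gamma_ID G = (LEAST k. \<exists>C. is_id_code G C \<and> card C = k)"

definition is_star :: "'b graph \<Rightarrow> nat \<Rightarrow> 'b \<Rightarrow> bool" where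
  "is_star S D c \<longleftrightarrow> simple_graph S \<and> c \<in> verts S \<and> card (verts S) = D + 1
     \<and> (\<forall>x y. adj S x y \<longleftrightarrow> (x = c \<and> y \<in> verts S - {c}) \<or> (y = c \<and> x \<in> verts S - {c}))"

text \<open>G' \<rhd>_v S: disjoint union of G' and S (on the sum type), where the leaf l of S
  is identified with the vertex v of G'.\<close>
definition glue_map :: "'a \<Rightarrow> 'b \<Rightarrow> 'b \<Rightarrow> 'a + 'b" where
  "glue_map v l x = (if x = l then Inl v else Inr x)"

definition glue :: "'a graph \<Rightarrow> 'a \<Rightarrow> 'b graph \<Rightarrow> 'b \<Rightarrow> ('a + 'b) graph" where
  "glue G v S l =
    (Inl ` verts G \<union> Inr ` (verts S - {l}),
     \<lambda>p q. (\<exists>a b. p = Inl a \<and> q = Inl b \<and> adj G a b)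
          \<or> (\<exists>x y. adj S x y \<and> p = glue_map v l x \<and> q = glue_map v l y))"

end

theory Submission
  imports Defs
begin

lemma verts_glue: "verts (glue G v S l) = Inl ` verts G \<union> Inr ` (verts S - {l})"
  by (simp add: verts_def glue_def)

lemma adj_glue: "adj (glue G v S l) p q \<longleftrightarrow>
   (\<exists>a b. p = Inl a \<and> q = Inl b \<and> adj G a b)
          \<or> (\<exists>x y. adj S x y \<and> p = glue_map v l x \<and> q = glue_map v l y)"
  by (simp add: adj_def glue_def)

context
  fixes G :: "'a graph" and v :: 'a and S :: "'b graph" and D :: nat and c l :: 'b
  assumes sg: "simple_graph G" and vG: "v \<in> verts G"
    and D3: "D \<ge> 3" and st: "is_star S D c" and lS: "l \<in> verts S" and lc: "l \<noteq> c"
begin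

lemma adjS: "adj S x y \<longleftrightarrow> (x = c \<and> y \<in> verts S - {c}) \<or> (y = c \<and> x \<in> verts S - {c})"
  using st by (simp add: is_star_def)

lemma cS: "c \<in> verts S" using st by (simp add: is_star_def)

lemma adj_LL: "adj (glue G v S l) (Inl a) (Inl b) \<longleftrightarrow> adj G a b"
  by (auto simp: adj_glue glue_map_def adjS split: if_splits)

lemma adj_LR: "adj (glue G v S l) (Inl a) (Inr y) \<longleftrightarrow> a = v \<and> y = c"
  using lS lc by (auto simp: adj_glue glue_map_def adjS split: if_splits)

lemma adj_RL: "adj (glue G v S l) (Inr x) (Inl b) \<longleftrightarrow> x = c \<and> b = v"
  using lS lc by (auto simp: adj_glue glue_map_def adjS split: if_splits)

lemma adj_RR: "adj (glue G v S l) (Inr x) (Inr y) \<longleftrightarrow> x \<noteq> l \<and> y \<noteq> l \<and> adj S x y"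
  by (auto simp: adj_glue glue_map_def split: if_splits)

lemma nb_L: "u \<in> verts G \<Longrightarrow> cnbhd (glue G v S l) (Inl u) =
   Inl ` cnbhd G u \<union> (if u = v then {Inr c} else {})"
  using cS lc by (auto simp: cnbhd_def verts_glue adj_LL adj_LR)

lemma nb_leaf: "x \<in> verts S - {c, l} \<Longrightarrow> cnbhd (glue G v S l) (Inr x) = {Inr x, Inr c}"
  using cS lc by (auto simp: cnbhd_def verts_glue adj_RL adj_RR adjS)

lemma nb_c: "cnbhd (glue G v S l) (Inr c) = {Inr c, Inl v} \<union> Inr ` (verts S - {c, l})"
  using cS lc vG by (auto simp: cnbhd_def verts_glue adj_RL adj_RR adjS)

end

theorem mainTheorem4:
  fixes G :: "'a graph" and v :: 'a and S :: "'b graph" and D :: nat and c l :: 'b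
  assumes "simple_graph G" and "identifiable G" and "v \<in> verts G"
    and "D \<ge> 3" and "is_star S D c" and "l \<in> verts S" and "l \<noteq> c"
  shows "identifiable (glue G v S l) \<and> gamma_ID (glue G v S l) \<le> gamma_ID G + D - 1"
proof -
  note A = assms(1,3-7)
  let ?H = "glue G v S l"
  have finS: "finite (verts S)" using assms(5) by (simp add: is_star_def simple_graph_def)
  have finG: "finite (verts G)" using assms(1) by (simp add: simple_graph_def)
  have cS: "c \<in> verts S" using cS[OF A] .
  have "is_id_code G (verts G)"
    using assms(2) by (auto simp: is_id_code_def identifiable_def cnbhd_def)
  then have "\<exists>k. \<exists>C. is_id_code G C \<and> card C = k" by blast
  then have "\<exists>C. is_id_code G C \<and> card C = gamma_ID G"
    unfolding gamma_ID_def by (rule LeastI_ex)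
  then obtain C' where C': "is_id_code G C'" "card C' = gamma_ID G" by blast
  have C'V: "C' \<subseteq> verts G" using C' by (simp add: is_id_code_def)
  define L where "L = verts S - {c, l}"
  have cardL: "card L = D - 1"
    using finS cS assms(5,6,7) by (simp add: L_def is_star_def card_Diff_subset)
  then have "card L \<ge> 2" using assms(4) by simp
  then obtain a where a: "a \<in> L"
    by (metis card.empty ex_in_conv not_numeral_le_zero)
  have "card (L - {a}) \<ge> 1" using \<open>card L \<ge> 2\<close> a by (simp add: card_Diff_singleton_if)
  then obtain b where "b \<in> L - {a}"
    by (metis card.empty ex_in_conv not_one_le_zero)
  then have ab: "a \<in> L" "b \<in> L" "a \<noteq> b" using a by auto
  define C where "C = Inl ` C' \<union> Inr ` L"
  have VH: "verts ?H = Inl ` verts G \<union> Inr ` L \<union> {Inr c}"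
    using cS assms(7) by (auto simp: verts_glue L_def)
  have tL: "cnbhd ?H (Inl u) \<inter> C = Inl ` (cnbhd G u \<inter> C')" if "u \<in> verts G" for u
    using nb_L[OF A that] by (auto simp: C_def L_def)
  have tleaf: "cnbhd ?H (Inr x) \<inter> C = {Inr x}" if "x \<in> L" for x
    using nb_leaf[OF A, of x] that by (auto simp: C_def L_def)
  have tc: "Inr ` L \<subseteq> cnbhd ?H (Inr c) \<inter> C"
    using nb_c[OF A] by (auto simp: C_def L_def)
  have cL: "c \<notin> L" by (simp add: L_def)
  have ne: "cnbhd ?H p \<inter> C \<noteq> {}" if "p \<in> verts ?H" for p
  proof -
    from that consider (l) u where "p = Inl u" "u \<in> verts G" | (r) x where "p = Inr x" "x \<in> L"
      | (c) "p = Inr c" unfolding VH by blast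
    then show ?thesis
    proof cases
      case l then show ?thesis using tL C' by (auto simp: is_id_code_def)
    next
      case r then show ?thesis using tleaf by auto
    next
      case c then show ?thesis using tc ab by auto
    qed
  qed
  have cmpLR: "Inl ` X \<noteq> Y" if "Inr z \<in> Y" for X :: "'a set" and Y :: "('a + 'b) set" and z using that by auto
  have ia: "Inr a \<in> cnbhd ?H (Inr c) \<inter> C" using tc ab by auto
  have ib: "Inr b \<in> cnbhd ?H (Inr c) \<inter> C" using tc ab by auto
  have cc: "cnbhd ?H (Inr c) \<inter> C \<noteq> {Inr x}" for x
  proof
    assume "cnbhd ?H (Inr c) \<inter> C = {Inr x}"
    then have "Inr a = (Inr x :: 'a + 'b)" "Inr b = (Inr x :: 'a + 'b)" using ia ib by auto
    then show False using ab(3) by simp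
  qed
  have sep: "cnbhd ?H p \<inter> C \<noteq> cnbhd ?H q \<inter> C"
    if "p \<in> verts ?H" "q \<in> verts ?H" "p \<noteq> q" for p q
  proof -
    from that(1) consider (l) u where "p = Inl u" "u \<in> verts G" | (r) x where "p = Inr x" "x \<in> L"
      | (c) "p = Inr c" unfolding VH by blast
    then show ?thesis
    proof cases
      case l
      from that(2) consider (l2) w where "q = Inl w" "w \<in> verts G" | (r2) y where "q = Inr y" "y \<in> L"
        | (c2) "q = Inr c" unfolding VH by blast
      then show ?thesis
      proof cases
        case l2
        have "cnbhd G u \<inter> C' \<noteq> cnbhd G w \<inter> C'" using C' l l2 that(3)
          by (auto simp: is_id_code_def)
        then show ?thesis using l l2 tL by (simp add: inj_image_eq_iff)
      next
        case r2 then show ?thesis using l tL tleaf by auto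
      next
        case c2 then show ?thesis by (simp add: tL[OF l(2)] l c2 cmpLR[OF ia])
      qed
    next
      case r
      from that(2) consider (l2) w where "q = Inl w" "w \<in> verts G" | (r2) y where "q = Inr y" "y \<in> L"
        | (c2) "q = Inr c" unfolding VH by blast
      then show ?thesis
      proof cases
        case l2 then show ?thesis using r tL tleaf by auto
      next
        case r2 then show ?thesis using r tleaf that(3) by auto
      next
        case c2 then show ?thesis using cc[of x] tleaf[OF r(2)] r c2 by metis
      qed
    next
      case c
      from that(2) consider (l2) w where "q = Inl w" "w \<in> verts G" | (r2) y where "q = Inr y" "y \<in> L"
        | (c2) "q = Inr c" unfolding VH by blast
      then show ?thesis
      proof cases
        case l2 then show ?thesis using cmpLR[OF ia] by (metis tL[OF l2(2)] l2 c)
      next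
        case r2 then show ?thesis using cc[of y] tleaf[OF r2(2)] r2 c by metis
      next
        case c2 then show ?thesis using c that(3) by simp
      qed
    qed
  qed
  have CV: "C \<subseteq> verts ?H" using C'V VH by (auto simp: C_def)
  have code: "is_id_code ?H C" using CV ne sep by (simp add: is_id_code_def)
  have idH: "identifiable ?H" unfolding identifiable_def
  proof (intro ballI impI)
    fix p q assume "p \<in> verts ?H" "q \<in> verts ?H" "p \<noteq> q"
    from sep[OF this] show "cnbhd ?H p \<noteq> cnbhd ?H q" by auto
  qed
  have finC': "finite C'" using C'V finG finite_subset by blast
  have finL: "finite L" using finS by (simp add: L_def)
  have "card C = card C' + card L"
    unfolding C_def using finC' finL
    by (subst card_Un_disjoint) (auto simp: card_image)
  then have cardC: "card C = gamma_ID G + D - 1" using C' cardL assms(4) by simp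
  have "gamma_ID ?H \<le> card C"
    unfolding gamma_ID_def using code by (intro Least_le) blast
  then show ?thesis using idH cardC by simp
qed

end
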